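(* Assume the Lipschitz gradient assumption, $r_1>L_x$, $r_2>L_y$, and let $\{(x^t,y^t,z^t,v^t)\}$ be generated by DS-GDA with $c,\alpha>0$, $\beta,\mu\in(0,1)$. Then for every $t\ge0$, $$d(y^{t+1},z^{t+1},v^{t+1})\ge d(y^t,z^t,v^t)+\frac{(2-\mu)r_2}{2\mu}\|v^{t+1}-v^t\|^2+\frac{r_1}{2}\langle z^{t+1}+z^t-2x(y^{t+1},z^{t+1},v^t),z^{t+1}-z^t\rangle+\langle\nabla_yF(x(y^t,z^t,v^t),y^t,z^t,v^t),y^{t+1}-y^t\rangle-\frac{L_d}{2}\|y^{t+1}-y^t\|^2,$$ where $L_d=L_y\sigma_1+L_y+r_2$, $\sigma_1=\frac{L_y+r_1-L_x}{r_1-L_x}$.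
   Context: Let $\mathcal X\subset\mathbb R^n$, $\mathcal Y\subset\mathbb R^d$ be nonempty convex compact sets and $f:\mathbb R^n\times\mathbb R^d\to\mathbb R$ continuously differentiable. Lipschitz gradient assumption: there are $L_x,L_y>0$ such that for all $x,x'\in\mathcal X$, $y,y'\in\mathcal Y$, $\|\nabla_x f(x,y)-\nabla_x f(x',y')\|\le L_x(\|x-x'\|+\|y-y'\|)$ and $\|\nabla_y f(x,y)-\nabla_y f(x',y')\|\le L_y(\|x-x'\|+\|y-y'\|)$. $F(x,y,z,v)=f(x,y)+\frac{r_1}{2}\|x-z\|^2-\frac{r_2}{2}\|y-v\|^2$; $d(y,z,v)=\min_{x\in\mathcal X}F(x,y,z,v)$ with unique minimizer $x(y,z,v)$. DS-GDA: given $x^0,y^0,z^0,v^0$, for $t\ge0$: $x^{t+1}=\mathrm{proj}_{\mathcal X}(x^t-c\nabla_xF(x^t,y^t,z^t,v^t))$; $y^{t+1}=\mathrm{proj}_{\mathcal Y}(y^t+\alpha\nabla_yF(x^{t+1},y^t,z^t,v^t))$; $z^{t+1}=z^t+\beta(x^{t+1}-z^t)$; $v^{t+1}=v^t+\mu(y^{t+1}-v^t)$. *)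

theory Defs
  imports "HOL-Analysis.Analysis"
begin

definition FF :: "('a::euclidean_space \<Rightarrow> 'b::euclidean_space \<Rightarrow> real) \<Rightarrow> real \<Rightarrow> real
    \<Rightarrow> 'a \<Rightarrow> 'b \<Rightarrow> 'a \<Rightarrow> 'b \<Rightarrow> real" where
  "FF f r1 r2 x y z v = f x y + r1 / 2 * (norm (x - z))\<^sup>2 - r2 / 2 * (norm (y - v))\<^sup>2"

definition gradxF :: "('a::euclidean_space \<Rightarrow> 'b::euclidean_space \<Rightarrow> 'a) \<Rightarrow> real
    \<Rightarrow> 'a \<Rightarrow> 'b \<Rightarrow> 'a \<Rightarrow> 'b \<Rightarrow> 'a" where
  "gradxF gx r1 x y z v = gx x y + r1 *\<^sub>R (x - z)"

definition gradyF :: "('a::euclidean_space \<Rightarrow> 'b::euclidean_space \<Rightarrow> 'b) \<Rightarrow> real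
    \<Rightarrow> 'a \<Rightarrow> 'b \<Rightarrow> 'a \<Rightarrow> 'b \<Rightarrow> 'b" where
  "gradyF gy r2 x y z v = gy x y - r2 *\<^sub>R (y - v)"

definition dfun :: "('a::euclidean_space \<Rightarrow> 'b::euclidean_space \<Rightarrow> real) \<Rightarrow> real \<Rightarrow> real
    \<Rightarrow> 'a set \<Rightarrow> 'b \<Rightarrow> 'a \<Rightarrow> 'b \<Rightarrow> real" where
  "dfun f r1 r2 X y z v = (INF x\<in>X. FF f r1 r2 x y z v)"

definition xopt :: "('a::euclidean_space \<Rightarrow> 'b::euclidean_space \<Rightarrow> real) \<Rightarrow> real \<Rightarrow> real
    \<Rightarrow> 'a set \<Rightarrow> 'b \<Rightarrow> 'a \<Rightarrow> 'b \<Rightarrow> 'a" where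
  "xopt f r1 r2 X y z v =
     (THE x. x \<in> X \<and> (\<forall>x'\<in>X. FF f r1 r2 x y z v \<le> FF f r1 r2 x' y z v))"

end

theory Submission imports Defs begin

lemma descent_1d:
  fixes \<phi> \<phi>' :: "real \<Rightarrow> real"
  assumes d: "\<And>s. (\<phi> has_real_derivative \<phi>' s) (at s)"
    and b: "\<And>s. 0 \<le> s \<Longrightarrow> s \<le> 1 \<Longrightarrow> \<bar>\<phi>' s - \<phi>' 0\<bar> \<le> K * s"
  shows "\<bar>\<phi> 1 - \<phi> 0 - \<phi>' 0\<bar> \<le> K/2"
proof -
  have "(\<lambda>s. \<phi> s - s * \<phi>' 0 - K/2*(s * s)) 1 \<le> (\<lambda>s. \<phi> s - s * \<phi>' 0 - K/2*(s * s)) 0"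
  proof (rule DERIV_nonpos_imp_nonincreasing[of 0 1])
    fix s :: real assume s: "0 \<le> s" "s \<le> 1"
    have "((\<lambda>s. \<phi> s - s * \<phi>' 0 - K/2*(s * s)) has_real_derivative \<phi>' s - \<phi>' 0 - K * s) (at s)"
      by (auto intro!: derivative_eq_intros d)
    moreover have "\<phi>' s - \<phi>' 0 - K * s \<le> 0" using b[OF s] by linarith
    ultimately show "\<exists>y. DERIV (\<lambda>s. \<phi> s - s * \<phi>' 0 - K/2*(s * s)) s :> y \<and> y \<le> 0" by blast
  qed simp
  moreover
  have "(\<lambda>s. \<phi> s - s * \<phi>' 0 + K/2*(s * s)) 0 \<le> (\<lambda>s. \<phi> s - s * \<phi>' 0 + K/2*(s * s)) 1"
  proof (rule DERIV_nonneg_imp_nondecreasing[of 0 1])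
    fix s :: real assume s: "0 \<le> s" "s \<le> 1"
    have "((\<lambda>s. \<phi> s - s * \<phi>' 0 + K/2*(s * s)) has_real_derivative \<phi>' s - \<phi>' 0 + K * s) (at s)"
      by (auto intro!: derivative_eq_intros d)
    moreover have "\<phi>' s - \<phi>' 0 + K * s \<ge> 0" using b[OF s] by linarith
    ultimately show "\<exists>y. DERIV (\<lambda>s. \<phi> s - s * \<phi>' 0 + K/2*(s * s)) s :> y \<and> y \<ge> 0" by blast
  qed simp
  ultimately have "\<phi> 1 - \<phi>' 0 - K/2 \<le> \<phi> 0" "\<phi> 0 \<le> \<phi> 1 - \<phi>' 0 + K/2" by simp_all
  then show ?thesis unfolding abs_le_iff by (intro conjI; linarith)
qed

lemma path_deriv_x:
  fixes f :: "'a::euclidean_space \<Rightarrow> 'b::euclidean_space \<Rightarrow> real"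
  assumes deriv: "\<And>a b. ((\<lambda>p. f (fst p) (snd p)) has_derivative
                   (\<lambda>h. gx a b \<bullet> fst h + gy a b \<bullet> snd h)) (at (a, b))"
  shows "((\<lambda>s. f (a + s *\<^sub>R h) (b + s *\<^sub>R k)) has_real_derivative
            gx (a + s *\<^sub>R h) (b + s *\<^sub>R k) \<bullet> h + gy (a + s *\<^sub>R h) (b + s *\<^sub>R k) \<bullet> k) (at s)"
proof -
  have p: "((\<lambda>s. (a + s *\<^sub>R h, b + s *\<^sub>R k)) has_derivative (\<lambda>t. (t *\<^sub>R h, t *\<^sub>R k))) (at s)"
    by (auto intro!: derivative_eq_intros)
  have "((\<lambda>p. f (fst p) (snd p)) \<circ> (\<lambda>s. (a + s *\<^sub>R h, b + s *\<^sub>R k)) has_derivative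
     (\<lambda>h'. gx (a + s *\<^sub>R h) (b + s *\<^sub>R k) \<bullet> fst h' + gy (a + s *\<^sub>R h) (b + s *\<^sub>R k) \<bullet> snd h') \<circ> (\<lambda>t. (t *\<^sub>R h, t *\<^sub>R k))) (at s)"
    by (rule diff_chain_at[OF p deriv])
  then have "((\<lambda>s. f (a + s *\<^sub>R h) (b + s *\<^sub>R k)) has_derivative
     (\<lambda>t. gx (a + s *\<^sub>R h) (b + s *\<^sub>R k) \<bullet> (t *\<^sub>R h) + gy (a + s *\<^sub>R h) (b + s *\<^sub>R k) \<bullet> (t *\<^sub>R k))) (at s)"
    by (simp add: o_def)
  then show ?thesis
    unfolding has_field_derivative_def
    by (rule has_derivative_eq_rhs) (auto simp: fun_eq_iff algebra_simps)
qed

lemma quad_ineq: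
  fixes m L u A :: real
  assumes m: "m > 0" and L: "L \<ge> 0" and A: "A \<ge> 0"
  shows "m / 2 * u\<^sup>2 - L * u * A \<ge> - (L * ((L + m) / m)) / 2 * A\<^sup>2"
proof -
  have h1: "0 \<le> (m * u - L * A)\<^sup>2" by simp
  have h2: "0 \<le> L * m * (A * A)" using m L by simp
  have "L * ((L + m) / m) = L * L / m + L" using m by (simp add: field_simps)
  then show ?thesis using m h1 h2 by (simp add: field_simps power2_eq_square algebra_simps)
qed

context
  fixes f :: "'a::euclidean_space \<Rightarrow> 'b::euclidean_space \<Rightarrow> real"
    and gx :: "'a \<Rightarrow> 'b \<Rightarrow> 'a" and gy :: "'a \<Rightarrow> 'b \<Rightarrow> 'b"
    and X :: "'a set" and Y :: "'b set" and Lx Ly :: real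
  assumes deriv: "\<And>a b. ((\<lambda>p. f (fst p) (snd p)) has_derivative
                   (\<lambda>h. gx a b \<bullet> fst h + gy a b \<bullet> snd h)) (at (a, b))"
    and Xc: "convex X" and Yc: "convex Y"
    and Lip_x: "\<And>a a' b b'. a \<in> X \<Longrightarrow> a' \<in> X \<Longrightarrow> b \<in> Y \<Longrightarrow> b' \<in> Y \<Longrightarrow>
                  norm (gx a b - gx a' b') \<le> Lx * (norm (a - a') + norm (b - b'))"
    and Lpos: "Lx > 0"
    and Lip_y: "\<And>a a' b b'. a \<in> X \<Longrightarrow> a' \<in> X \<Longrightarrow> b \<in> Y \<Longrightarrow> b' \<in> Y \<Longrightarrow>
                  norm (gy a b - gy a' b') \<le> Ly * (norm (a - a') + norm (b - b'))"
begin

lemma descent_x: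
  assumes a: "a \<in> X" "a' \<in> X" "b \<in> Y"
  shows "\<bar>f a' b - f a b - gx a b \<bullet> (a' - a)\<bar> \<le> Lx / 2 * (norm (a' - a))\<^sup>2"
proof -
  define h where "h = a' - a"
  have D: "\<And>s. ((\<lambda>s. f (a + s *\<^sub>R h) b) has_real_derivative gx (a + s *\<^sub>R h) b \<bullet> h) (at s)"
    using path_deriv_x[OF deriv, of a h b 0] by simp
  have mem: "a + s *\<^sub>R h \<in> X" if "0 \<le> s" "s \<le> 1" for s
  proof -
    have "a + s *\<^sub>R h = (1 - s) *\<^sub>R a + s *\<^sub>R a'" by (simp add: h_def algebra_simps)
    then show ?thesis using convexD[OF Xc a(1) a(2), of "1 - s" s] that by simp
  qed
  have B: "\<bar>gx (a + s *\<^sub>R h) b \<bullet> h - gx (a + 0 *\<^sub>R h) b \<bullet> h\<bar> \<le> (Lx * (norm h)\<^sup>2) * s"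
    if "0 \<le> s" "s \<le> 1" for s
  proof -
    have "\<bar>gx (a + s *\<^sub>R h) b \<bullet> h - gx (a + 0 *\<^sub>R h) b \<bullet> h\<bar> = \<bar>(gx (a + s *\<^sub>R h) b - gx a b) \<bullet> h\<bar>"
      by (simp add: inner_diff_left)
    also have "\<dots> \<le> norm (gx (a + s *\<^sub>R h) b - gx a b) * norm h" by (rule Cauchy_Schwarz_ineq2)
    also have "\<dots> \<le> (Lx * (norm (a + s *\<^sub>R h - a) + norm (b - b))) * norm h"
      by (intro mult_right_mono Lip_x mem that a) auto
    also have "\<dots> = (Lx * (norm h)\<^sup>2) * s" using that by (simp add: power2_eq_square)
    finally show ?thesis .
  qed
  have "\<bar>f (a + 1 *\<^sub>R h) b - f (a + 0 *\<^sub>R h) b - gx (a + 0 *\<^sub>R h) b \<bullet> h\<bar> \<le> (Lx * (norm h)\<^sup>2) / 2"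
    by (rule descent_1d[where \<phi>="\<lambda>s. f (a + s *\<^sub>R h) b" and \<phi>'="\<lambda>s. gx (a + s *\<^sub>R h) b \<bullet> h", OF D B])
  then show ?thesis by (simp add: h_def)
qed

lemma descent_y:
  assumes a: "a \<in> X" "b \<in> Y" "b' \<in> Y"
  shows "\<bar>f a b' - f a b - gy a b \<bullet> (b' - b)\<bar> \<le> Ly / 2 * (norm (b' - b))\<^sup>2"
proof -
  define h where "h = b' - b"
  have D: "\<And>s. ((\<lambda>s. f a (b + s *\<^sub>R h)) has_real_derivative gy a (b + s *\<^sub>R h) \<bullet> h) (at s)"
    using path_deriv_x[OF deriv, of a 0 b h] by simp
  have mem: "b + s *\<^sub>R h \<in> Y" if "0 \<le> s" "s \<le> 1" for s
  proof -
    have "b + s *\<^sub>R h = (1 - s) *\<^sub>R b + s *\<^sub>R b'" by (simp add: h_def algebra_simps)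
    then show ?thesis using convexD[OF Yc a(2) a(3), of "1 - s" s] that by simp
  qed
  have B: "\<bar>gy a (b + s *\<^sub>R h) \<bullet> h - gy a (b + 0 *\<^sub>R h) \<bullet> h\<bar> \<le> (Ly * (norm h)\<^sup>2) * s"
    if "0 \<le> s" "s \<le> 1" for s
  proof -
    have "\<bar>gy a (b + s *\<^sub>R h) \<bullet> h - gy a (b + 0 *\<^sub>R h) \<bullet> h\<bar> = \<bar>(gy a (b + s *\<^sub>R h) - gy a b) \<bullet> h\<bar>"
      by (simp add: inner_diff_left)
    also have "\<dots> \<le> norm (gy a (b + s *\<^sub>R h) - gy a b) * norm h" by (rule Cauchy_Schwarz_ineq2)
    also have "\<dots> \<le> (Ly * (norm (a - a) + norm (b + s *\<^sub>R h - b))) * norm h"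
      by (intro mult_right_mono Lip_y mem that a) auto
    also have "\<dots> = (Ly * (norm h)\<^sup>2) * s" using that by (simp add: power2_eq_square)
    finally show ?thesis .
  qed
  have "\<bar>f a (b + 1 *\<^sub>R h) - f a (b + 0 *\<^sub>R h) - gy a (b + 0 *\<^sub>R h) \<bullet> h\<bar> \<le> (Ly * (norm h)\<^sup>2) / 2"
    by (rule descent_1d[where \<phi>="\<lambda>s. f a (b + s *\<^sub>R h)" and \<phi>'="\<lambda>s. gy a (b + s *\<^sub>R h) \<bullet> h", OF D B])
  then show ?thesis by (simp add: h_def)
qed

lemma norm_add_sq: "(norm (u + w))\<^sup>2 = (norm u)\<^sup>2 + 2 * (u \<bullet> w) + (norm (w::'c::real_inner))\<^sup>2"
  by (simp add: power2_norm_eq_inner inner_add_left inner_add_right inner_commute)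

lemma first_order:
  assumes a: "a \<in> X" "b \<in> Y" "x2 \<in> X" and r1: "r1 \<ge> 0"
    and mn: "\<forall>x'\<in>X. FF f r1 r2 a b z v \<le> FF f r1 r2 x' b z v"
  shows "(gx a b + r1 *\<^sub>R (a - z)) \<bullet> (x2 - a) \<ge> 0"
proof (rule ccontr)
  define h where "h = x2 - a"
  define G where "G = (gx a b + r1 *\<^sub>R (a - z)) \<bullet> h"
  define C where "C = (Lx + r1) / 2 * (norm h)\<^sup>2"
  assume "\<not> ?thesis"
  then have G: "G < 0" by (simp add: G_def h_def)
  have key: "0 \<le> s * G + C * s\<^sup>2" if s: "0 \<le> s" "s \<le> 1" for s
  proof -
    have mem: "a + s *\<^sub>R h \<in> X"
    proof -
      have "a + s *\<^sub>R h = (1 - s) *\<^sub>R a + s *\<^sub>R x2" by (simp add: h_def algebra_simps)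
      then show ?thesis using convexD[OF Xc a(1) a(3), of "1 - s" s] s by simp
    qed
    have d: "\<bar>f (a + s *\<^sub>R h) b - f a b - gx a b \<bullet> (a + s *\<^sub>R h - a)\<bar> \<le> Lx / 2 * (norm (a + s *\<^sub>R h - a))\<^sup>2"
      by (rule descent_x[OF a(1) mem a(2)])
    have "FF f r1 r2 a b z v \<le> FF f r1 r2 (a + s *\<^sub>R h) b z v" using mn mem by blast
    moreover have "(norm (a + s *\<^sub>R h - z))\<^sup>2 = (norm (a - z))\<^sup>2 + 2 * ((a - z) \<bullet> (s *\<^sub>R h)) + (norm (s *\<^sub>R h))\<^sup>2"
      using norm_add_sq[of "a - z" "s *\<^sub>R h"] by (simp add: algebra_simps)
    ultimately have e2: "0 \<le> f (a + s *\<^sub>R h) b - f a b + r1 * s * ((a - z) \<bullet> h) + r1 / 2 * (s\<^sup>2 * (norm h)\<^sup>2)"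
      unfolding FF_def by (simp add: power_mult_distrib algebra_simps)
    moreover have e1: "f (a + s *\<^sub>R h) b - f a b \<le> s * (gx a b \<bullet> h) + Lx / 2 * (s\<^sup>2 * (norm h)\<^sup>2)"
      using order_trans[OF abs_ge_self d] s by (simp add: power_mult_distrib algebra_simps)
    moreover have "s * G = s * (gx a b \<bullet> h) + r1 * s * ((a - z) \<bullet> h)"
      unfolding G_def by (simp add: inner_add_left algebra_simps)
    moreover have "C * s\<^sup>2 = Lx / 2 * (s\<^sup>2 * (norm h)\<^sup>2) + r1 / 2 * (s\<^sup>2 * (norm h)\<^sup>2)"
      unfolding C_def by (simp add: algebra_simps add_divide_distrib)
    ultimately show ?thesis by linarith
  qed
  show False
  proof (cases "C = 0")
    case True
    then show False using key[of 1] G by simp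
  next
    case False
    have "C \<ge> 0" using r1 Lpos unfolding C_def by simp
    then have C0: "C > 0" using False by simp
    define s where "s = min 1 (- G / (2 * C))"
    have s0: "0 < s" "s \<le> 1" using G C0 by (auto simp: s_def divide_neg_pos)
    have "C * s \<le> - G / 2" using C0 unfolding s_def by (simp add: min_def field_simps)
    moreover have "0 \<le> G + C * s"
    proof -
      have "0 \<le> s * (G + C * s)" using key[OF _ s0(2)] s0(1) by (simp add: power2_eq_square algebra_simps)
      then show ?thesis using s0(1) by (simp add: zero_le_mult_iff)
    qed
    ultimately show False using G by linarith
  qed
qed

lemma strong_conv:
  assumes a: "a \<in> X" "b \<in> Y" "x2 \<in> X" and r1: "r1 \<ge> 0"
    and mn: "\<forall>x'\<in>X. FF f r1 r2 a b z v \<le> FF f r1 r2 x' b z v"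
  shows "FF f r1 r2 x2 b z v \<ge> FF f r1 r2 a b z v + (r1 - Lx) / 2 * (norm (x2 - a))\<^sup>2"
proof -
  have fo: "(gx a b + r1 *\<^sub>R (a - z)) \<bullet> (x2 - a) \<ge> 0" by (rule first_order[OF a r1 mn])
  have d: "f x2 b \<ge> f a b + gx a b \<bullet> (x2 - a) - Lx / 2 * (norm (x2 - a))\<^sup>2"
    using abs_le_D2[OF descent_x[OF a(1) a(3) a(2)]] by linarith
  have n: "(norm (x2 - z))\<^sup>2 = (norm (a - z))\<^sup>2 + 2 * ((a - z) \<bullet> (x2 - a)) + (norm (x2 - a))\<^sup>2"
    using norm_add_sq[of "a - z" "x2 - a"] by simp
  have fo': "gx a b \<bullet> (x2 - a) + r1 * ((a - z) \<bullet> (x2 - a)) \<ge> 0" using fo by (simp add: inner_add_left)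
  show ?thesis unfolding FF_def n using d fo' by (simp add: algebra_simps add_divide_distrib diff_divide_distrib)
qed

lemma f_cont: "continuous_on UNIV (\<lambda>x. f x b)"
proof -
  have c: "continuous_on UNIV (\<lambda>p. f (fst p) (snd p))"
    by (rule continuous_at_imp_continuous_on) (auto intro: has_derivative_continuous[OF deriv])
  have "continuous_on UNIV ((\<lambda>p. f (fst p) (snd p)) \<circ> (\<lambda>x. (x, b)))"
    by (rule continuous_on_compose[OF _ continuous_on_subset[OF c]]) (auto intro!: continuous_intros)
  then show ?thesis by (simp add: o_def)
qed

lemma xopt_spec:
  assumes Xk: "compact X" "X \<noteq> {}" and b: "b \<in> Y" and r1: "r1 > Lx"
  shows "xopt f r1 r2 X b z v \<in> X \<and> (\<forall>x'\<in>X. FF f r1 r2 (xopt f r1 r2 X b z v) b z v \<le> FF f r1 r2 x' b z v)"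
proof -
  have "continuous_on X (\<lambda>x. FF f r1 r2 x b z v)" unfolding FF_def
    by (intro continuous_intros continuous_on_subset[OF f_cont]) auto
  then obtain a where a: "a \<in> X" "\<forall>x'\<in>X. FF f r1 r2 a b z v \<le> FF f r1 r2 x' b z v"
    using continuous_attains_inf[OF Xk] by blast
  have r0: "r1 \<ge> 0" using r1 Lpos by simp
  have "\<exists>!x. x \<in> X \<and> (\<forall>x'\<in>X. FF f r1 r2 x b z v \<le> FF f r1 r2 x' b z v)"
  proof (rule ex1I[of _ a])
    show "a \<in> X \<and> (\<forall>x'\<in>X. FF f r1 r2 a b z v \<le> FF f r1 r2 x' b z v)" using a by blast
  next
    fix x assume x: "x \<in> X \<and> (\<forall>x'\<in>X. FF f r1 r2 x b z v \<le> FF f r1 r2 x' b z v)"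
    have "FF f r1 r2 x b z v \<ge> FF f r1 r2 a b z v + (r1 - Lx) / 2 * (norm (x - a))\<^sup>2"
      using strong_conv[OF a(1) b _ r0 a(2)] x by blast
    moreover have "FF f r1 r2 x b z v \<le> FF f r1 r2 a b z v" using x a by blast
    ultimately have "(r1 - Lx) / 2 * (norm (x - a))\<^sup>2 \<le> 0" by linarith
    then have "(norm (x - a))\<^sup>2 \<le> 0" using r1 by (simp add: mult_le_0_iff)
    then show "x = a" by simp
  qed
  then show ?thesis unfolding xopt_def by (rule theI')
qed

lemma dfun_eq:
  assumes Xk: "compact X" "X \<noteq> {}" and b: "b \<in> Y" and r1: "r1 > Lx"
  shows "dfun f r1 r2 X b z v = FF f r1 r2 (xopt f r1 r2 X b z v) b z v"
  unfolding dfun_def using xopt_spec[OF Xk b r1, of r2 z v]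
  by (intro cInf_eq_minimum) auto

lemma step_v:
  assumes Xk: "compact X" "X \<noteq> {}" and b: "b \<in> Y" and r1: "r1 > Lx"
    and v': "v' = v + \<mu> *\<^sub>R (b - v)" and mu: "0 < \<mu>"
  shows "dfun f r1 r2 X b z v' \<ge> dfun f r1 r2 X b z v + (2 - \<mu>) * r2 / (2 * \<mu>) * (norm (v' - v))\<^sup>2"
proof -
  define a where "a = xopt f r1 r2 X b z v'"
  have a: "a \<in> X" using xopt_spec[OF Xk b r1] a_def by blast
  have e1: "dfun f r1 r2 X b z v' = FF f r1 r2 a b z v'" using dfun_eq[OF Xk b r1] a_def by simp
  have e2: "dfun f r1 r2 X b z v \<le> FF f r1 r2 a b z v"
    using dfun_eq[OF Xk b r1, of r2 z v] xopt_spec[OF Xk b r1, of r2 z v] a by simp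
  have n1: "b - v' = (1 - \<mu>) *\<^sub>R (b - v)" using v' by (simp add: algebra_simps)
  have n2: "v' - v = \<mu> *\<^sub>R (b - v)" using v' by simp
  have "FF f r1 r2 a b z v' = FF f r1 r2 a b z v + r2 / 2 * ((norm (b - v))\<^sup>2 - (norm (b - v'))\<^sup>2)"
    unfolding FF_def by (simp add: algebra_simps)
  also have "r2 / 2 * ((norm (b - v))\<^sup>2 - (norm (b - v'))\<^sup>2) = (2 - \<mu>) * r2 / (2 * \<mu>) * (norm (v' - v))\<^sup>2"
  proof -
    have q1: "(norm (b - v'))\<^sup>2 = (1 - \<mu>)\<^sup>2 * (norm (b - v))\<^sup>2" unfolding n1 by (simp add: power_mult_distrib)
    have q2: "(norm (v' - v))\<^sup>2 = \<mu>\<^sup>2 * (norm (b - v))\<^sup>2" unfolding n2 by (simp add: power_mult_distrib)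
    show ?thesis unfolding q1 q2 using mu by (simp add: field_simps power2_eq_square)
  qed
  finally show ?thesis using e1 e2 by linarith
qed

lemma norm_diff_identity:
  fixes x z z' :: "'c::real_inner"
  shows "(norm (x - z'))\<^sup>2 - (norm (x - z))\<^sup>2 = (z' + z - 2 *\<^sub>R x) \<bullet> (z' - z)"
  by (simp add: power2_norm_eq_inner inner_diff_left inner_diff_right inner_add_left inner_commute algebra_simps)

lemma step_z:
  assumes Xk: "compact X" "X \<noteq> {}" and b: "b \<in> Y" and r1: "r1 > Lx"
  shows "dfun f r1 r2 X b z' v \<ge> dfun f r1 r2 X b z v + r1 / 2 * ((z' + z - 2 *\<^sub>R xopt f r1 r2 X b z' v) \<bullet> (z' - z))"
proof -
  define a where "a = xopt f r1 r2 X b z' v"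
  have a: "a \<in> X" using xopt_spec[OF Xk b r1] a_def by blast
  have e1: "dfun f r1 r2 X b z' v = FF f r1 r2 a b z' v" using dfun_eq[OF Xk b r1] a_def by simp
  have e2: "dfun f r1 r2 X b z v \<le> FF f r1 r2 a b z v"
    using dfun_eq[OF Xk b r1, of r2 z v] xopt_spec[OF Xk b r1, of r2 z v] a by simp
  have "FF f r1 r2 a b z' v = FF f r1 r2 a b z v + r1 / 2 * ((norm (a - z'))\<^sup>2 - (norm (a - z))\<^sup>2)"
    unfolding FF_def by (simp add: algebra_simps)
  then show ?thesis using e1 e2 norm_diff_identity[of a z' z] a_def by simp
qed

lemma step_y:
  assumes Xk: "compact X" "X \<noteq> {}" and b: "b \<in> Y" "b' \<in> Y" and r1: "r1 > Lx" and Ly: "Ly > 0"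
  shows "dfun f r1 r2 X b' z v \<ge> dfun f r1 r2 X b z v
           + gradyF gy r2 (xopt f r1 r2 X b z v) b z v \<bullet> (b' - b)
           - (Ly * ((Ly + r1 - Lx) / (r1 - Lx)) + Ly + r2) / 2 * (norm (b' - b))\<^sup>2"
proof -
  define x where "x = xopt f r1 r2 X b z v"
  define x2 where "x2 = xopt f r1 r2 X b' z v"
  define u where "u = norm (x2 - x)"
  define A where "A = norm (b' - b)"
  define m where "m = r1 - Lx"
  have m: "m > 0" using r1 m_def by simp
  have r0: "r1 \<ge> 0" using r1 Lpos by simp
  have x: "x \<in> X" "\<forall>x'\<in>X. FF f r1 r2 x b z v \<le> FF f r1 r2 x' b z v" using xopt_spec[OF Xk b(1) r1] x_def by blast+
  have x2: "x2 \<in> X" using xopt_spec[OF Xk b(2) r1] x2_def by blast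
  have e1: "dfun f r1 r2 X b' z v = FF f r1 r2 x2 b' z v" using dfun_eq[OF Xk b(2) r1] x2_def by simp
  have e2: "dfun f r1 r2 X b z v = FF f r1 r2 x b z v" using dfun_eq[OF Xk b(1) r1] x_def by simp
  have sc: "FF f r1 r2 x2 b z v \<ge> FF f r1 r2 x b z v + m / 2 * u\<^sup>2"
    using strong_conv[OF x(1) b(1) x2 r0 x(2)] unfolding m_def u_def by simp
  have dy: "f x2 b' \<ge> f x2 b + gy x2 b \<bullet> (b' - b) - Ly / 2 * A\<^sup>2"
    using abs_le_D2[OF descent_y[OF x2 b(1) b(2)]] unfolding A_def by linarith
  have cs: "gy x2 b \<bullet> (b' - b) \<ge> gy x b \<bullet> (b' - b) - Ly * u * A"
  proof -
    have "\<bar>(gy x2 b - gy x b) \<bullet> (b' - b)\<bar> \<le> norm (gy x2 b - gy x b) * A"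
      unfolding A_def by (rule Cauchy_Schwarz_ineq2)
    also have "\<dots> \<le> (Ly * (norm (x2 - x) + norm (b - b))) * A"
      by (intro mult_right_mono Lip_y x2 x b) (auto simp: A_def)
    finally show ?thesis unfolding u_def by (simp add: inner_diff_left abs_le_iff)
  qed
  have nb: "(norm (b' - v))\<^sup>2 = (norm (b - v))\<^sup>2 + 2 * ((b - v) \<bullet> (b' - b)) + A\<^sup>2"
    using norm_add_sq[of "b - v" "b' - b"] unfolding A_def by simp
  have gr: "gradyF gy r2 x b z v \<bullet> (b' - b) = gy x b \<bullet> (b' - b) - r2 * ((b - v) \<bullet> (b' - b))"
    unfolding gradyF_def by (simp add: inner_diff_left)
  have q: "m / 2 * u\<^sup>2 - Ly * u * A \<ge> - (Ly * ((Ly + m) / m)) / 2 * A\<^sup>2"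
    by (rule quad_ineq[OF m]) (use Ly in \<open>auto simp: A_def\<close>)
  have main: "FF f r1 r2 x2 b' z v \<ge> FF f r1 r2 x b z v + gradyF gy r2 x b z v \<bullet> (b' - b)
       - (Ly + r2) / 2 * A\<^sup>2 + (m / 2 * u\<^sup>2 - Ly * u * A)"
  proof -
    have F1: "FF f r1 r2 x2 b' z v = f x2 b' + r1/2*(norm (x2-z))\<^sup>2 - r2/2*(norm (b'-v))\<^sup>2" by (simp add: FF_def)
    have F2: "FF f r1 r2 x2 b z v = f x2 b + r1/2*(norm (x2-z))\<^sup>2 - r2/2*(norm (b-v))\<^sup>2" by (simp add: FF_def)
    have nb2: "r2/2*(norm (b'-v))\<^sup>2 = r2/2*(norm (b-v))\<^sup>2 + r2*((b - v) \<bullet> (b' - b)) + r2/2*A\<^sup>2"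
      unfolding nb distrib_left by simp
    have "(Ly + r2) / 2 * A\<^sup>2 = Ly/2*A\<^sup>2 + r2/2*A\<^sup>2" by (simp add: add_divide_distrib distrib_right)
    then show ?thesis using sc dy cs nb2 gr F1 F2 by linarith
  qed
  have k: "(Ly * ((Ly + r1 - Lx) / (r1 - Lx)) + Ly + r2) / 2 * A\<^sup>2
      = (Ly * ((Ly + m) / m)) / 2 * A\<^sup>2 + (Ly + r2) / 2 * A\<^sup>2"
    unfolding m_def by (simp add: add_divide_distrib distrib_right algebra_simps)
  show ?thesis unfolding x_def[symmetric] A_def[symmetric] k using main q e1 e2 by linarith
qed

end

theorem lemma6:
  fixes f :: "'a::euclidean_space \<Rightarrow> 'b::euclidean_space \<Rightarrow> real"
    and gx :: "'a \<Rightarrow> 'b \<Rightarrow> 'a" and gy :: "'a \<Rightarrow> 'b \<Rightarrow> 'b"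
    and X :: "'a set" and Y :: "'b set"
    and Lx Ly r1 r2 c \<alpha> \<beta> \<mu> :: real
    and x z :: "nat \<Rightarrow> 'a" and y v :: "nat \<Rightarrow> 'b"
    and t :: nat
  assumes X: "convex X" "compact X" "X \<noteq> {}"
    and Y: "convex Y" "compact Y" "Y \<noteq> {}"
    and deriv: "\<And>a b. ((\<lambda>p. f (fst p) (snd p)) has_derivative
                   (\<lambda>h. gx a b \<bullet> fst h + gy a b \<bullet> snd h)) (at (a, b))"
    and cont_gx: "continuous_on UNIV (\<lambda>p. gx (fst p) (snd p))"
    and cont_gy: "continuous_on UNIV (\<lambda>p. gy (fst p) (snd p))"
    and Lpos: "Lx > 0" "Ly > 0"
    and Lip_x: "\<And>a a' b b'. a \<in> X \<Longrightarrow> a' \<in> X \<Longrightarrow> b \<in> Y \<Longrightarrow> b' \<in> Y \<Longrightarrow>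
                  norm (gx a b - gx a' b') \<le> Lx * (norm (a - a') + norm (b - b'))"
    and Lip_y: "\<And>a a' b b'. a \<in> X \<Longrightarrow> a' \<in> X \<Longrightarrow> b \<in> Y \<Longrightarrow> b' \<in> Y \<Longrightarrow>
                  norm (gy a b - gy a' b') \<le> Ly * (norm (a - a') + norm (b - b'))"
    and r: "r1 > Lx" "r2 > Ly"
    and steps: "c > 0" "\<alpha> > 0" "0 < \<beta>" "\<beta> < 1" "0 < \<mu>" "\<mu> < 1"
    and init: "x 0 \<in> X" "y 0 \<in> Y"
    and upd_x: "\<And>s. x (Suc s) = closest_point X (x s - c *\<^sub>R gradxF gx r1 (x s) (y s) (z s) (v s))"
    and upd_y: "\<And>s. y (Suc s) = closest_point Y (y s + \<alpha> *\<^sub>R gradyF gy r2 (x (Suc s)) (y s) (z s) (v s))"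
    and upd_z: "\<And>s. z (Suc s) = z s + \<beta> *\<^sub>R (x (Suc s) - z s)"
    and upd_v: "\<And>s. v (Suc s) = v s + \<mu> *\<^sub>R (y (Suc s) - v s)"
  shows "let \<sigma>1 = (Ly + r1 - Lx) / (r1 - Lx);
             Ld = Ly * \<sigma>1 + Ly + r2;
             d = dfun f r1 r2 X;
             xo = xopt f r1 r2 X
         in d (y (Suc t)) (z (Suc t)) (v (Suc t))
            \<ge> d (y t) (z t) (v t)
              + (2 - \<mu>) * r2 / (2 * \<mu>) * (norm (v (Suc t) - v t))\<^sup>2
              + r1 / 2 * ((z (Suc t) + z t - 2 *\<^sub>R xo (y (Suc t)) (z (Suc t)) (v t)) \<bullet> (z (Suc t) - z t))
              + gradyF gy r2 (xo (y t) (z t) (v t)) (y t) (z t) (v t) \<bullet> (y (Suc t) - y t)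
              - Ld / 2 * (norm (y (Suc t) - y t))\<^sup>2"
proof -
  have yY: "y s \<in> Y" for s
  proof (cases s)
    case 0 then show ?thesis using init by simp
  next
    case (Suc s') then show ?thesis
      using upd_y[of s'] closest_point_in_set[OF compact_imp_closed[OF Y(2)] Y(3)] by simp
  qed
  have SV: "dfun f r1 r2 X (y (Suc t)) (z (Suc t)) (v (Suc t)) \<ge> dfun f r1 r2 X (y (Suc t)) (z (Suc t)) (v t)
      + (2 - \<mu>) * r2 / (2 * \<mu>) * (norm (v (Suc t) - v t))\<^sup>2"
    by (rule step_v[OF deriv X(1) Y(1) Lip_x Lpos(1) Lip_y X(2) X(3) yY[of "Suc t"] r(1) upd_v[of t] steps(5)])
  have SZ: "dfun f r1 r2 X (y (Suc t)) (z (Suc t)) (v t) \<ge> dfun f r1 r2 X (y (Suc t)) (z t) (v t)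
      + r1 / 2 * ((z (Suc t) + z t - 2 *\<^sub>R xopt f r1 r2 X (y (Suc t)) (z (Suc t)) (v t)) \<bullet> (z (Suc t) - z t))"
    by (rule step_z[OF deriv X(1) Y(1) Lip_x Lpos(1) Lip_y X(2) X(3) yY[of "Suc t"] r(1)])
  have SY: "dfun f r1 r2 X (y (Suc t)) (z t) (v t) \<ge> dfun f r1 r2 X (y t) (z t) (v t)
           + gradyF gy r2 (xopt f r1 r2 X (y t) (z t) (v t)) (y t) (z t) (v t) \<bullet> (y (Suc t) - y t)
           - (Ly * ((Ly + r1 - Lx) / (r1 - Lx)) + Ly + r2) / 2 * (norm (y (Suc t) - y t))\<^sup>2"
    by (rule step_y[OF deriv X(1) Y(1) Lip_x Lpos(1) Lip_y X(2) X(3) yY[of t] yY[of "Suc t"] r(1) Lpos(2)])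
  show ?thesis unfolding Let_def using SV SZ SY by linarith
qed

end
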